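(* Let $n>2k$, $k\ge t+3$, and let $\mathcal F\subseteq\binom{[n]}{k}$ be a maximal $t$-intersecting family with $\tau_t(\mathcal F)=t+2$ and $\tau_t(\mathcal T_t(\mathcal F))=t+1$. Suppose there exist $U_0\in\mathcal U_t(\mathcal F)$ and $F_0\in\mathcal F$ with $|U_0\cap F_0|=t-1$ such that $\mathcal T_t(\mathcal F)\subseteq\binom{U_0\cup F_0}{t+2}$. Then at least one of the following holds: (i) $|\mathcal T_t(\mathcal F)|<\max\left\{(k-t)(k-t+1),\ (t+2)(k-t)+1,\ \binom{t+4}{2}\right\}$; (ii) there exist $M\in\binom{[n]}{k+2}$ and $W\in\binom{M}{t+2}$ such that $\mathcal T_t(\mathcal F)=\left\{T\in\binom{M}{t+2}: |T\cap W|\ge t+1\right\}$.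
   Context: A family is $t$-intersecting if any two members meet in at least $t$ elements. A $t$-cover of a family $\mathcal G$ of subsets of $[n]$ is a set $S\subseteq[n]$ with $|S\cap G|\ge t$ for all $G\in\mathcal G$; $\tau_t(\mathcal G)$ is the minimum size of a $t$-cover, and $\mathcal T_t(\mathcal G)$ is the set of all $t$-covers of $\mathcal G$ of size $\tau_t(\mathcal G)$. $\mathcal U_t(\mathcal F)=\mathcal T_t(\mathcal T_t(\mathcal F))$ is the family of all minimum-size $t$-covers of $\mathcal T_t(\mathcal F)$. A $t$-intersecting $\mathcal F\subseteq\binom{[n]}{k}$ is maximal if no $t$-intersecting subfamily of $\binom{[n]}{k}$ properly contains it. *)

theory Defs
  imports Main
begin

definition ksubsets :: "nat \<Rightarrow> nat \<Rightarrow> nat set set" where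
  "ksubsets n k = {A. A \<subseteq> {1..n} \<and> card A = k}"

definition t_intersecting :: "nat \<Rightarrow> nat set set \<Rightarrow> bool" where
  "t_intersecting t F \<longleftrightarrow> (\<forall>A\<in>F. \<forall>B\<in>F. t \<le> card (A \<inter> B))"

definition t_cover :: "nat \<Rightarrow> nat \<Rightarrow> nat set set \<Rightarrow> nat set \<Rightarrow> bool" where
  "t_cover n t G S \<longleftrightarrow> S \<subseteq> {1..n} \<and> (\<forall>X\<in>G. t \<le> card (S \<inter> X))"

definition tau :: "nat \<Rightarrow> nat \<Rightarrow> nat set set \<Rightarrow> nat" where
  "tau n t G = (LEAST m. \<exists>S. t_cover n t G S \<and> card S = m)"

definition Tcov :: "nat \<Rightarrow> nat \<Rightarrow> nat set set \<Rightarrow> nat set set" where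
  "Tcov n t G = {S. t_cover n t G S \<and> card S = tau n t G}"

definition Ucov :: "nat \<Rightarrow> nat \<Rightarrow> nat set set \<Rightarrow> nat set set" where
  "Ucov n t F = Tcov n t (Tcov n t F)"

definition maximal_t_intersecting :: "nat \<Rightarrow> nat \<Rightarrow> nat \<Rightarrow> nat set set \<Rightarrow> bool" where
  "maximal_t_intersecting n k t F \<longleftrightarrow>
     F \<subseteq> ksubsets n k \<and> t_intersecting t F \<and>
     (\<forall>G. F \<subset> G \<and> G \<subseteq> ksubsets n k \<longrightarrow> \<not> t_intersecting t G)"

end

theory Submission imports Defs begin


definition bnd :: "nat \<Rightarrow> nat \<Rightarrow> nat" where
 "bnd t m = max (max (m * (m + 1)) ((t + 2) * m + 1)) ((t + 4) choose 2)"

lemma bnd1: "m * (m + 1) \<le> bnd t m" unfolding bnd_def by (intro max.coboundedI1) simp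
lemma bndS: "(t+2)*m + 1 \<le> bnd t m" unfolding bnd_def by (intro max.coboundedI1 max.cobounded2)
lemma bnd3: "(t+4 choose 2) \<le> bnd t m" unfolding bnd_def by (rule max.cobounded2)

lemma sq3: assumes "m \<ge> (3::nat)" shows "4*m \<le> m*(m+1)"
proof -
  have "4*m \<le> (m+1)*m" using assms by (intro mult_le_mono1) simp
  then show ?thesis by (simp only: mult.commute)
qed

lemma bndA: assumes "m \<ge> 3" shows "m + 1 + (m + 1 choose 2) < bnd t m"
proof -
  have c: "(m+1 choose 2) = (m+1)*m div 2" by (simp add: choose_two)
  have "2 * ((m+1)*m div 2) \<le> (m+1)*m" by (rule times_div_less_eq_dividend)
  moreover have "(m+1)*m = m*(m+1)" by (rule mult.commute)
  moreover have "4*m \<le> m*(m+1)" using sq3[OF assms] .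
  ultimately have "m + 1 + (m+1)*m div 2 < m*(m+1)" using assms by linarith
  then show ?thesis using bnd1[of m t] c by linarith
qed

lemma bndB2: assumes "m \<ge> 3" "t \<ge> 1" shows "3*m + t < bnd t m"
proof (cases "t = 1")
  case True
  have "4*m \<le> m*(m+1)" using sq3[OF assms(1)] .
  then show ?thesis using True bnd1[of m t] assms by linarith
next
  case False
  then have "t \<ge> 2" using assms by simp
  have "(t - 1) * 1 < (t - 1) * m" using \<open>t\<ge>2\<close> assms by simp
  then have "3*m + t < (t+2)*m + 1" using \<open>t\<ge>2\<close> by (simp add: algebra_simps diff_mult_distrib)
  then show ?thesis using bndS[of t m] by linarith
qed

lemma bndB1: assumes "m \<ge> 3" "t \<ge> 1" shows "2*m + 3*t + 2 < bnd t m"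
proof (cases "t = 1")
  case True
  have "4*m \<le> m*(m+1)" using sq3[OF assms(1)] .
  then show ?thesis using True bnd1[of m t] assms by linarith
next
  case False
  then have t2: "t \<ge> 2" using assms by simp
  show ?thesis
  proof (cases "m = 3")
    case True
    have c: "(t+4 choose 2) = (t+4)*(t+3) div 2" by (simp add: choose_two add.commute)
    have e: "(t+4)*(t+3) = t*t + 7*t + 12" by (simp add: algebra_simps)
    have "t*t \<ge> 2*2" using mult_le_mono[OF t2 t2] .
    moreover obtain s where s: "s = t*t" by blast
    ultimately have "s \<ge> 4" by simp
    then have "(3*t+9)*2 \<le> s + 7*t + 12" using t2 by simp
    then have "(3*t+9)*2 \<le> t*t + 7*t + 12" using s by simp
    then have "(3*t+9)*2 \<le> (t+4)*(t+3)" by (simp only: e)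
    then have "3*t+9 \<le> (t+4)*(t+3) div 2" using less_eq_div_iff_mult_less_eq[of 2 "3*t+9" "(t+4)*(t+3)"] by linarith
    then show ?thesis using True c bnd3[of t m] by linarith
  next
    case False
    then have "m \<ge> 4" using assms by simp
    then have "t*4 \<le> t*m" by simp
    moreover have "(t+2)*m = t*m + 2*m" by (simp add: algebra_simps)
    ultimately have "2*m + 3*t + 2 < (t+2)*m + 1" using t2 by linarith
    then show ?thesis using bndS[of t m] by linarith
  qed
qed



lemma two_el: assumes "card e = 2" "x \<in> e" shows "\<exists>z. z \<noteq> x \<and> e = {x,z}"
proof -
  from assms(1) obtain a b where "e = {a,b}" "a \<noteq> b" by (auto simp: card_2_iff)
  then show ?thesis using assms(2) by auto
qed

lemma card_le_via: assumes "A \<subseteq> B \<union> C" "finite B" "finite C" shows "card A \<le> card B + card C"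
  by (meson assms card_Un_le card_mono finite_UnI le_trans)

lemma core:
  fixes TT :: "nat set set" and U0 R :: "nat set" and t m :: nat
  assumes fU: "finite U0" and cU: "card U0 = t+1" and t1: "t \<ge> 1"
    and fR: "finite R" and cR: "card R = m+1" and m3: "m \<ge> 3" and dj: "U0 \<inter> R = {}"
    and TT: "\<And>T. T \<in> TT \<Longrightarrow> T \<subseteq> U0 \<union> R \<and> card T = t+2 \<and> t \<le> card (T \<inter> U0)"
    and TI: "\<And>T1 T2. T1 \<in> TT \<Longrightarrow> T2 \<in> TT \<Longrightarrow> t \<le> card (T1 \<inter> T2)"
  shows "card TT < bnd t m \<or> (\<exists>r0\<in>R. TT = {S. S \<subseteq> U0 \<union> R \<and> card S = t+2 \<and> t+1 \<le> card (S \<inter> insert r0 U0)})"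
proof -
  have finTT: "finite TT"
  proof (rule finite_subset)
    show "TT \<subseteq> Pow (U0 \<union> R)" using TT by blast
  qed (use fU fR in simp)
  define T1 where "T1 = {T\<in>TT. U0 \<subseteq> T}"
  define T' where "T' = {T\<in>TT. \<not> U0 \<subseteq> T}"
  have fin1: "finite T1" "finite T'" using finTT unfolding T1_def T'_def by auto
  have split: "card TT \<le> card T1 + card T'"
  proof -
    have "TT = T1 \<union> T'" unfolding T1_def T'_def by blast
    then show ?thesis by (metis card_Un_le)
  qed
  have cT1: "card T1 \<le> m+1"
  proof -
    have "inj_on (\<lambda>T. T - U0) T1"
    proof (rule inj_onI)
      fix A B assume "A \<in> T1" "B \<in> T1" "A - U0 = B - U0"
      then show "A = B" unfolding T1_def by blast
    qed
    moreover have "(\<lambda>T. T - U0) ` T1 \<subseteq> (\<lambda>r. {r}) ` R"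
    proof
      fix e assume "e \<in> (\<lambda>T. T - U0) ` T1"
      then obtain T where T: "T \<in> T1" "e = T - U0" by blast
      then have "T \<in> TT" "U0 \<subseteq> T" unfolding T1_def by auto
      then have "finite T" "card T = t+2" "T \<subseteq> U0 \<union> R" using TT card.infinite by fastforce+
      then have "card (T - U0) = 1" using card_Diff_subset[OF fU \<open>U0 \<subseteq> T\<close>] cU by simp
      then obtain r where "T - U0 = {r}" by (rule card_1_singletonE)
      then show "e \<in> (\<lambda>r. {r}) ` R" using T \<open>T \<subseteq> U0 \<union> R\<close> by blast
    qed
    ultimately have "card T1 \<le> card ((\<lambda>r. {r}) ` R)" using fR by (intro card_inj_on_le) auto
    also have "\<dots> \<le> card R" by (rule card_image_le[OF fR])
    finally show ?thesis using cR by simp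
  qed
  have P: "card (T \<inter> U0) = t \<and> card (U0 - T) = 1 \<and> T - U0 \<subseteq> R \<and> card (T - U0) = 2 \<and> finite T"
    if "T \<in> T'" for T
  proof -
    have T: "T \<in> TT" "\<not> U0 \<subseteq> T" using that unfolding T'_def by auto
    have fT: "finite T" using TT[OF T(1)] card.infinite by fastforce
    have "card (T \<inter> U0) \<le> t+1" using card_mono[OF fU, of "T \<inter> U0"] cU by auto
    moreover have "card (T \<inter> U0) \<noteq> t+1"
    proof
      assume "card (T \<inter> U0) = t+1"
      then have "T \<inter> U0 = U0" using card_subset_eq[OF fU, of "T \<inter> U0"] cU by auto
      then show False using T(2) by blast
    qed
    ultimately have c1: "card (T \<inter> U0) = t" using TT[OF T(1)] by simp
    have "card (U0 - T) = card U0 - card (U0 \<inter> T)" using fU by (simp add: card_Diff_subset_Int)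
    then have c2: "card (U0 - T) = 1" using c1 cU by (simp add: Int_commute)
    have "card (T - U0) = card T - card (T \<inter> U0)" using fT by (simp add: card_Diff_subset_Int)
    then have c3: "card (T - U0) = 2" using c1 TT[OF T(1)] by simp
    show ?thesis using c1 c2 c3 fT TT[OF T(1)] by blast
  qed
  have recon: "A = B" if "A - U0 = B - U0" "U0 - A = U0 - B" for A B
    using that by blast
  have cross: "(A - U0) \<inter> (B - U0) \<noteq> {}" if AB: "A \<in> T'" "B \<in> T'" "U0 - A \<noteq> U0 - B" for A B
  proof
    assume E: "(A - U0) \<inter> (B - U0) = {}"
    obtain u where u: "U0 - A = {u}" using P[OF AB(1)] card_1_singletonE by blast
    obtain v where v: "U0 - B = {v}" using P[OF AB(2)] card_1_singletonE by blast
    have uv: "u \<noteq> v" "u \<in> U0" "v \<in> U0" using u v AB(3) by auto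
    have "A \<inter> B \<subseteq> U0 - {u,v}" using E u v by blast
    then have "card (A \<inter> B) \<le> card (U0 - {u,v})" using fU by (intro card_mono) auto
    also have "\<dots> = card U0 - card {u,v}" using uv fU by (intro card_Diff_subset) auto
    also have "\<dots> = t - 1" using uv cU by simp
    finally have "card (A \<inter> B) \<le> t - 1" .
    moreover have "t \<le> card (A \<inter> B)" using TI AB unfolding T'_def by blast
    ultimately show False using t1 by linarith
  qed
  define multi where "multi e \<longleftrightarrow> (\<exists>A\<in>T'. \<exists>B\<in>T'. U0 - A \<noteq> U0 - B \<and> A - U0 = e \<and> B - U0 = e)" for e
  have meet: "e \<inter> (T - U0) \<noteq> {}" if me: "multi e" and mT: "T \<in> T'" for e T
  proof -
    obtain A B where AB: "A \<in> T'" "B \<in> T'" "U0 - A \<noteq> U0 - B" "A - U0 = e" "B - U0 = e"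
      using me unfolding multi_def by blast
    show ?thesis
    proof (cases "U0 - A = U0 - T")
      case True
      then have "U0 - B \<noteq> U0 - T" using AB by simp
      then show ?thesis using cross[OF AB(2) mT] AB by simp
    next
      case False
      then show ?thesis using cross[OF AB(1) mT] AB by simp
    qed
  qed
  have inj_nm: "inj_on (\<lambda>T. T - U0) {T\<in>T'. T - U0 \<in> S}" if "\<And>e. e \<in> S \<Longrightarrow> \<not> multi e" for S
  proof (rule inj_onI)
    fix A B assume A: "A \<in> {T\<in>T'. T - U0 \<in> S}" and B: "B \<in> {T\<in>T'. T - U0 \<in> S}" and eq: "A - U0 = B - U0"
    have "\<not> multi (A - U0)" using that A by blast
    then have "U0 - A = U0 - B" using A B eq unfolding multi_def by blast
    then show "A = B" using eq recon by blast
  qed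
  have cnt_nm: "card {T\<in>T'. T - U0 \<in> S} \<le> card S" if "\<And>e. e \<in> S \<Longrightarrow> \<not> multi e" "finite S" for S
    using inj_nm[OF that(1)] that(2) by (intro card_inj_on_le) auto
  have fiber: "card {T\<in>T'. T - U0 = e} \<le> t+1" for e
  proof -
    have "inj_on (\<lambda>T. U0 - T) {T\<in>T'. T - U0 = e}"
      by (rule inj_onI) (use recon in auto)
    moreover have "(\<lambda>T. U0 - T) ` {T\<in>T'. T - U0 = e} \<subseteq> (\<lambda>u. {u}) ` U0"
    proof
      fix x assume "x \<in> (\<lambda>T. U0 - T) ` {T\<in>T'. T - U0 = e}"
      then obtain T where "T \<in> T'" "x = U0 - T" by blast
      moreover obtain u where "U0 - T = {u}" using P[OF \<open>T \<in> T'\<close>] card_1_singletonE by blast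
      ultimately show "x \<in> (\<lambda>u. {u}) ` U0" by blast
    qed
    ultimately have "card {T\<in>T'. T - U0 = e} \<le> card ((\<lambda>u. {u}) ` U0)" using fU by (intro card_inj_on_le) auto
    also have "\<dots> \<le> t+1" using card_image_le[OF fU, of "\<lambda>u. {u}"] cU by simp
    finally show ?thesis .
  qed
  show ?thesis
  proof (cases "\<exists>e. multi e")
    case False
    define P2 where "P2 = {e. e \<subseteq> R \<and> card e = 2}"
    have "card {T\<in>T'. T - U0 \<in> P2} \<le> card P2"
      using False fR unfolding P2_def by (intro cnt_nm) auto
    moreover have "{T\<in>T'. T - U0 \<in> P2} = T'" using P unfolding P2_def by blast
    moreover have "card P2 = (m+1 choose 2)" unfolding P2_def using n_subsets[OF fR] cR by simp
    ultimately have "card T' \<le> (m+1 choose 2)" by simp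
    then have "card TT < bnd t m" using split cT1 bndA[OF m3, of t] by linarith
    then show ?thesis by blast
  next
    case True
    then obtain e0 where me0: "multi e0" by blast
    then obtain A0 where A0: "A0 \<in> T'" "A0 - U0 = e0" unfolding multi_def by blast
    have e0R: "e0 \<subseteq> R" "card e0 = 2" using P[OF A0(1)] A0 by auto
    show ?thesis
    proof (cases "\<exists>e1. multi e1 \<and> e1 \<noteq> e0")
      case True
      then obtain e1 where me1: "multi e1" "e1 \<noteq> e0" by blast
      then obtain A1 where A1: "A1 \<in> T'" "A1 - U0 = e1" unfolding multi_def by blast
      have e1R: "e1 \<subseteq> R" "card e1 = 2" using P[OF A1(1)] A1 by auto
      have "e0 \<inter> e1 \<noteq> {}" using meet[OF me0 A1(1)] A1 by simp
      then obtain r0 where r0: "r0 \<in> e0" "r0 \<in> e1" by blast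
      obtain x1 where x1: "x1 \<noteq> r0" "e0 = {r0, x1}" using two_el[OF e0R(2) r0(1)] by blast
      obtain x2 where x2: "x2 \<noteq> r0" "e1 = {r0, x2}" using two_el[OF e1R(2) r0(2)] by blast
      have x12: "x1 \<noteq> x2" using x1 x2 me1 by auto
      have inR: "r0 \<in> R" "x1 \<in> R" "x2 \<in> R" using e0R e1R x1 x2 by auto
      have r0U: "r0 \<notin> U0" using inR dj by blast
      show ?thesis
      proof (cases "\<forall>T\<in>T'. r0 \<in> T")
        case True
        define W where "W = insert r0 U0"
        define Phi where "Phi = {S. S \<subseteq> U0 \<union> R \<and> card S = t+2 \<and> t+1 \<le> card (S \<inter> W)}"
        have fW: "finite W" and cW: "card W = t+2" using fU cU r0U unfolding W_def by auto
        have sub: "TT \<subseteq> Phi"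
        proof
          fix T assume T: "T \<in> TT"
          have fT: "finite T" using TT[OF T] card.infinite by fastforce
          have "t+1 \<le> card (T \<inter> W)"
          proof (cases "U0 \<subseteq> T")
            case True
            then have "U0 \<subseteq> T \<inter> W" unfolding W_def by blast
            then show ?thesis using card_mono[of "T \<inter> W" U0] fT cU by auto
          next
            case False
            then have T': "T \<in> T'" using T unfolding T'_def by blast
            then have "r0 \<in> T" using True by blast
            then have "insert r0 (T \<inter> U0) \<subseteq> T \<inter> W" unfolding W_def by blast
            moreover have "card (insert r0 (T \<inter> U0)) = t+1" using P[OF T'] r0U fT by simp
            ultimately show ?thesis using card_mono[of "T \<inter> W" "insert r0 (T \<inter> U0)"] fT by auto
          qed
          then show "T \<in> Phi" using TT[OF T] unfolding Phi_def by blast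
        qed
        define X where "X = (\<lambda>r. insert r U0) ` R"
        define Y where "Y = (\<lambda>(u,y). insert r0 (insert y (U0 - {u}))) ` (U0 \<times> (R - {r0}))"
        have PhiXY: "Phi \<subseteq> X \<union> Y"
        proof
          fix S assume S: "S \<in> Phi"
          then have S1: "S \<subseteq> U0 \<union> R" "card S = t+2" "t+1 \<le> card (S \<inter> W)" unfolding Phi_def by auto
          have fS: "finite S" using S1(1) fU fR finite_subset by blast
          have cSW: "card (S \<inter> W) \<le> t+2" using card_mono[OF fW, of "S \<inter> W"] cW by auto
          have split1: "card S = card (S \<inter> W) + card (S - W)"
            using fS by (metis card_Int_Diff)
          show "S \<in> X \<union> Y"
          proof (cases "S - W = {}")
            case True
            then have "S \<subseteq> W" by blast
            then have "S = W" using card_subset_eq[OF fW] S1(2) cW by auto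
            then show ?thesis unfolding X_def W_def using inR by blast
          next
            case False
            then have "card (S - W) \<ge> 1" using fS by (simp add: Suc_le_eq card_gt_0_iff)
            then have "card (S - W) = 1" "card (S \<inter> W) = t+1" using split1 S1 by linarith+
            then obtain y where y: "S - W = {y}" using card_1_singletonE by blast
            have "card (W - S) = card W - card (W \<inter> S)" using fW by (simp add: card_Diff_subset_Int)
            then have "card (W - S) = 1" using \<open>card (S \<inter> W) = t+1\<close> cW by (simp add: Int_commute)
            then obtain w where w: "W - S = {w}" using card_1_singletonE by blast
            have Seq: "S = (W - {w}) \<union> {y}" using y w by blast
            have yR: "y \<in> R - {r0}" using y S1(1) unfolding W_def by blast
            have wW: "w \<in> W" using w by blast
            show ?thesis
            proof (cases "w = r0")
              case True
              then have "S = insert y U0" using Seq r0U unfolding W_def by blast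
              then show ?thesis unfolding X_def using yR by blast
            next
              case False
              then have wU: "w \<in> U0" using wW unfolding W_def by blast
              have "S = insert r0 (insert y (U0 - {w}))" using Seq False unfolding W_def by blast
              then have "S = (\<lambda>(u,y). insert r0 (insert y (U0 - {u}))) (w,y)" by simp
              moreover have "(w,y) \<in> U0 \<times> (R - {r0})" using wU yR by blast
              ultimately show ?thesis unfolding Y_def by blast
            qed
          qed
        qed
        have fXY: "finite (X \<union> Y)" unfolding X_def Y_def using fU fR by auto
        have cXY: "card (X \<union> Y) \<le> (t+2)*m + 1"
        proof -
          have "card X \<le> m+1" unfolding X_def using card_image_le[OF fR] cR by metis
          moreover have "card Y \<le> (t+1)*m"
          proof -
            have "card Y \<le> card (U0 \<times> (R - {r0}))" unfolding Y_def
              by (rule card_image_le) (use fU fR in auto)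
            also have "\<dots> = (t+1)*m" using cU cR inR fR by (simp add: card_cartesian_product)
            finally show ?thesis .
          qed
          moreover have "(t+2)*m + 1 = (m+1) + (t+1)*m" by (simp add: algebra_simps)
          ultimately show ?thesis using card_Un_le[of X Y] by linarith
        qed
        show ?thesis
        proof (cases "TT = Phi")
          case True
          then show ?thesis using inR(1) unfolding Phi_def W_def by blast
        next
          case False
          then have "TT \<subset> Phi" using sub by blast
          moreover have "finite Phi" using PhiXY fXY finite_subset by blast
          ultimately have "card TT < card Phi" by (rule psubset_card_mono[rotated])
          also have "\<dots> \<le> card (X \<union> Y)" using PhiXY fXY by (rule card_mono[rotated])
          finally have "card TT < bnd t m" using cXY bndS[of t m] by linarith
          then show ?thesis by blast
        qed
      next
        case False
        then obtain T2 where T2: "T2 \<in> T'" "r0 \<notin> T2" by blast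
        have "x1 \<in> T2" using meet[OF me0 T2(1)] x1 T2(2) by blast
        moreover have "x2 \<in> T2" using meet[OF me1(1) T2(1)] x2 T2(2) by blast
        ultimately have sub2: "{x1,x2} \<subseteq> T2 - U0" using inR dj by blast
        have e2: "T2 - U0 = {x1,x2}"
        proof -
          have "finite (T2 - U0)" using P[OF T2(1)] by blast
          moreover have "card {x1,x2} = card (T2 - U0)" using P[OF T2(1)] x12 by simp
          ultimately show ?thesis using card_subset_eq[OF _ sub2] by metis
        qed
        have nm: "\<not> multi {r0,y}" if "y \<notin> {x1,x2}" for y
        proof
          assume "multi {r0,y}"
          from meet[OF this T2(1)] e2 that x1 x2 show False by auto
        qed
        define Z where "Z = (\<lambda>y. {r0,y}) ` (R - {r0,x1,x2})"
        have fZ: "finite Z" unfolding Z_def using fR by auto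
        have "T' \<subseteq> ({T\<in>T'. T - U0 = e0} \<union> {T\<in>T'. T - U0 = e1}) \<union> ({T\<in>T'. T - U0 = {x1,x2}} \<union> {T\<in>T'. T - U0 \<in> Z})"
        proof
          fix T assume T: "T \<in> T'"
          show "T \<in> ({T\<in>T'. T - U0 = e0} \<union> {T\<in>T'. T - U0 = e1}) \<union> ({T\<in>T'. T - U0 = {x1,x2}} \<union> {T\<in>T'. T - U0 \<in> Z})"
          proof (cases "r0 \<in> T")
            case False
            have "x1 \<in> T" using meet[OF me0 T] x1 False by blast
            moreover have "x2 \<in> T" using meet[OF me1(1) T] x2 False by blast
            ultimately have sub: "{x1,x2} \<subseteq> T - U0" using inR dj by blast
            have "T - U0 = {x1,x2}"
            proof -
              have "finite (T - U0)" using P[OF T] by blast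
              moreover have "card {x1,x2} = card (T - U0)" using P[OF T] x12 by simp
              ultimately show ?thesis using card_subset_eq[OF _ sub] by metis
            qed
            then show ?thesis using T by blast
          next
            case True
            then have "r0 \<in> T - U0" using r0U by blast
            then obtain y where y: "y \<noteq> r0" "T - U0 = {r0,y}" using two_el[OF _ \<open>r0 \<in> T - U0\<close>] P[OF T] by blast
            have yR: "y \<in> R" using y P[OF T] by blast
            show ?thesis
            proof (cases "y \<in> {x1,x2}")
              case True
              then have "T - U0 = e0 \<or> T - U0 = e1" using y x1 x2 by auto
              then show ?thesis using T by blast
            next
              case False
              then have "T - U0 \<in> Z" unfolding Z_def using y yR by blast
              then show ?thesis using T by blast
            qed
          qed
        qed
        then have "card T' \<le> (card {T\<in>T'. T - U0 = e0} + card {T\<in>T'. T - U0 = e1}) + (card {T\<in>T'. T - U0 = {x1,x2}} + card {T\<in>T'. T - U0 \<in> Z})"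
        proof -
          let ?a = "{T\<in>T'. T - U0 = e0}" and ?b = "{T\<in>T'. T - U0 = e1}" and ?c = "{T\<in>T'. T - U0 = {x1,x2}}" and ?d = "{T\<in>T'. T - U0 \<in> Z}"
          have f: "finite ?a" "finite ?b" "finite ?c" "finite ?d" using fin1 by auto
          have "card T' \<le> card (?a \<union> ?b) + card (?c \<union> ?d)"
            using card_le_via[OF \<open>T' \<subseteq> _\<close>] f by blast
          moreover have "card (?a \<union> ?b) \<le> card ?a + card ?b" by (rule card_Un_le)
          moreover have "card (?c \<union> ?d) \<le> card ?c + card ?d" by (rule card_Un_le)
          ultimately show ?thesis by linarith
        qed
        moreover have "card {T\<in>T'. T - U0 \<in> Z} \<le> card Z"
        proof (rule cnt_nm[OF _ fZ])
          fix e assume "e \<in> Z"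
          then obtain y where "y \<in> R - {r0,x1,x2}" "e = {r0,y}" unfolding Z_def by blast
          then show "\<not> multi e" using nm by blast
        qed
        moreover have "card Z \<le> m - 2"
        proof -
          have "card (R - {r0,x1,x2}) = card R - card {r0,x1,x2}" using inR fR by (intro card_Diff_subset) auto
          moreover have "card {r0,x1,x2} = 3" using x1 x2 x12 by auto
          ultimately have "card (R - {r0,x1,x2}) = m - 2" using cR by simp
          then show ?thesis unfolding Z_def using card_image_le[of "R - {r0,x1,x2}" "\<lambda>y. {r0,y}"] fR by simp
        qed
        ultimately have "card T' \<le> 3*t + 3 + (m - 2)" using fiber[of e0] fiber[of e1] fiber[of "{x1,x2}"] by linarith
        then have "card TT \<le> 2*m + 3*t + 2" using split cT1 m3 by linarith
        then have "card TT < bnd t m" using bndB1[OF m3 t1] by linarith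
        then show ?thesis by blast
      qed
    next
      case False
      then have only: "e = e0" if "multi e" for e using that by blast
      obtain x y where xy: "e0 = {x,y}" "x \<noteq> y" using e0R(2) by (auto simp: card_2_iff)
      define Z where "Z = (\<lambda>z. {x,z}) ` (R - {x,y}) \<union> (\<lambda>z. {y,z}) ` (R - {x,y})"
      have fZ: "finite Z" unfolding Z_def using fR by auto
      have "T' \<subseteq> {T\<in>T'. T - U0 = e0} \<union> {T\<in>T'. T - U0 \<in> Z}"
      proof
        fix T assume T: "T \<in> T'"
        show "T \<in> {T\<in>T'. T - U0 = e0} \<union> {T\<in>T'. T - U0 \<in> Z}"
        proof (cases "T - U0 = e0")
          case True then show ?thesis using T by blast
        next
          case False
          obtain w where w: "w \<in> e0" "w \<in> T - U0" using meet[OF me0 T] by blast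
          obtain z where z: "z \<noteq> w" "T - U0 = {w,z}" using two_el[OF _ w(2)] P[OF T] by blast
          have zR: "z \<in> R" using z P[OF T] by blast
          have "z \<notin> {x,y}" using z w xy False by auto
          then have "T - U0 \<in> Z" using w(1) xy z zR unfolding Z_def by blast
          then show ?thesis using T by blast
        qed
      qed
      then have "card T' \<le> card {T\<in>T'. T - U0 = e0} + card {T\<in>T'. T - U0 \<in> Z}"
        using fin1 by (intro card_le_via) auto
      moreover have "card {T\<in>T'. T - U0 \<in> Z} \<le> card Z"
      proof (rule cnt_nm[OF _ fZ])
        fix e assume "e \<in> Z"
        then have "e \<noteq> e0" unfolding Z_def using xy by (auto simp: doubleton_eq_iff)
        then show "\<not> multi e" using only by blast
      qed
      moreover have "card Z \<le> 2 * (m - 1)"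
      proof -
        have cR2: "card (R - {x,y}) = m - 1" using xy e0R fR cR by (simp add: card_Diff_subset)
        have "card Z \<le> card ((\<lambda>z. {x,z}) ` (R - {x,y})) + card ((\<lambda>z. {y,z}) ` (R - {x,y}))"
          unfolding Z_def by (rule card_Un_le)
        also have "\<dots> \<le> card (R - {x,y}) + card (R - {x,y})"
          using fR by (intro add_mono card_image_le) auto
        finally show ?thesis using cR2 by simp
      qed
      ultimately have "card T' \<le> t + 1 + 2*(m-1)" using fiber[of e0] by linarith
      then have "card TT \<le> 3*m + t" using split cT1 m3 by linarith
      then have "card TT < bnd t m" using bndB2[OF m3 t1] by linarith
      then show ?thesis by blast
    qed
  qed
qed

lemma in_F:
  assumes mx: "maximal_t_intersecting n k t F" and kt: "t \<le> k"
    and T: "t_cover n t F T" and TG: "T \<subseteq> G" and G: "G \<subseteq> {1..n}" "card G = k"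
  shows "G \<in> F"
proof (rule ccontr)
  assume nG: "G \<notin> F"
  have FF: "F \<subseteq> ksubsets n k" "t_intersecting t F"
    and mxx: "\<And>G'. F \<subset> G' \<and> G' \<subseteq> ksubsets n k \<longrightarrow> \<not> t_intersecting t G'"
    using mx unfolding maximal_t_intersecting_def by blast+
  have fG: "finite G" using G finite_subset by blast
  have GB: "t \<le> card (G \<inter> B)" if "B \<in> F" for B
  proof -
    have "t \<le> card (T \<inter> B)" using T that unfolding t_cover_def by blast
    also have "\<dots> \<le> card (G \<inter> B)" using fG TG by (intro card_mono) auto
    finally show ?thesis .
  qed
  have "t_intersecting t (insert G F)"
    unfolding t_intersecting_def
  proof (intro ballI)
    fix A B assume A: "A \<in> insert G F" and B: "B \<in> insert G F"
    show "t \<le> card (A \<inter> B)"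
    proof (cases "A = G")
      case True
      show ?thesis
      proof (cases "B = G")
        case True then show ?thesis using \<open>A = G\<close> G kt by simp
      next
        case False then show ?thesis using B GB \<open>A = G\<close> by auto
      qed
    next
      case False
      then have AF: "A \<in> F" using A by blast
      show ?thesis
      proof (cases "B = G")
        case True then show ?thesis using GB[OF AF] by (simp add: Int_commute)
      next
        case False then show ?thesis using B AF FF(2) unfolding t_intersecting_def by blast
      qed
    qed
  qed
  moreover have "F \<subset> insert G F" using nG by blast
  moreover have "insert G F \<subseteq> ksubsets n k" using FF G unfolding ksubsets_def by blast
  ultimately show False using mxx by blast
qed

theorem lemma2p8:
  fixes n k t :: nat and F :: "nat set set" and U0 F0 :: "nat set"
  assumes "n > 2 * k" and "k \<ge> t + 3"
    and "F \<subseteq> ksubsets n k"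
    and "maximal_t_intersecting n k t F"
    and "tau n t F = t + 2"
    and "tau n t (Tcov n t F) = t + 1"
    and "U0 \<in> Ucov n t F" and "F0 \<in> F"
    and "card (U0 \<inter> F0) + 1 = t"
    and "Tcov n t F \<subseteq> {S. S \<subseteq> U0 \<union> F0 \<and> card S = t + 2}"
  shows "card (Tcov n t F) < max (max ((k - t) * (k - t + 1)) ((t + 2) * (k - t) + 1)) ((t + 4) choose 2)
    \<or> (\<exists>M W. M \<in> ksubsets n (k + 2) \<and> W \<subseteq> M \<and> card W = t + 2 \<and>
          Tcov n t F = {T. T \<subseteq> M \<and> card T = t + 2 \<and> t + 1 \<le> card (T \<inter> W)})"
proof -
  note nk = assms(1) and kt3 = assms(2) and mx = assms(4)
  define TT where "TT = Tcov n t F"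
  define m where "m = k - t"
  define R where "R = F0 - U0"
  have t1: "t \<ge> 1" using assms(9) by simp
  have m3: "m \<ge> 3" using kt3 unfolding m_def by simp
  have TTp: "t_cover n t F T \<and> card T = t + 2" if "T \<in> TT" for T
    using that assms(5) unfolding TT_def Tcov_def by simp
  have U0p: "t_cover n t TT U0" "card U0 = t + 1"
    using assms(7) assms(6) unfolding Ucov_def Tcov_def TT_def by auto
  have U0n: "U0 \<subseteq> {1..n}" using U0p(1) unfolding t_cover_def by blast
  have fU: "finite U0" using U0n finite_subset by blast
  have F0p: "F0 \<subseteq> {1..n}" "card F0 = k" using assms(3) assms(8) unfolding ksubsets_def by auto
  have fF0: "finite F0" using F0p finite_subset by blast
  have fR: "finite R" unfolding R_def using fF0 by blast
  have cR: "card R = m + 1"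
  proof -
    have "card R = card F0 - card (F0 \<inter> U0)" unfolding R_def using fF0 by (simp add: card_Diff_subset_Int)
    then show ?thesis using F0p assms(9) kt3 unfolding m_def by (simp add: Int_commute)
  qed
  have dj: "U0 \<inter> R = {}" unfolding R_def by blast
  have UR: "U0 \<union> R = U0 \<union> F0" unfolding R_def by blast
  have TTa: "T \<subseteq> U0 \<union> R \<and> card T = t+2 \<and> t \<le> card (T \<inter> U0)" if "T \<in> TT" for T
  proof -
    have "t \<le> card (U0 \<inter> T)" using U0p(1) that unfolding t_cover_def by blast
    then show ?thesis using assms(10) that UR unfolding TT_def by (auto simp: Int_commute)
  qed
  have TI: "t \<le> card (T1 \<inter> T2)" if T12: "T1 \<in> TT" "T2 \<in> TT" for T1 T2
  proof -
    have n1: "T1 \<subseteq> {1..n}" "T2 \<subseteq> {1..n}" using TTp[OF T12(1)] TTp[OF T12(2)] unfolding t_cover_def by auto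
    have c1: "card T1 = t+2" "card T2 = t+2" using TTp T12 by auto
    define Z where "Z = {1..n} - (T1 \<union> T2)"
    have "card (T1 \<union> T2) \<le> 2*t + 4" using card_Un_le[of T1 T2] c1 by simp
    moreover have "card Z = n - card (T1 \<union> T2)" unfolding Z_def using n1 using finite_subset[OF n1(1)] finite_subset[OF n1(2)] by (subst card_Diff_subset) auto
    ultimately have cZ: "card Z \<ge> 2*(k-t-2)" using nk kt3 by simp
    then obtain Z1 where Z1: "Z1 \<subseteq> Z" "card Z1 = k-t-2" "finite Z1"
      using obtain_subset_with_card_n[of "k-t-2" Z] by auto
    have fZ: "finite Z" unfolding Z_def by blast
    have "card (Z - Z1) = card Z - card Z1" using Z1 by (simp add: card_Diff_subset)
    then have "card (Z - Z1) \<ge> k-t-2" using cZ Z1 by simp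
    then obtain Z2 where Z2: "Z2 \<subseteq> Z - Z1" "card Z2 = k-t-2" "finite Z2"
      using obtain_subset_with_card_n[of "k-t-2" "Z - Z1"] by auto
    have fT: "finite T1" "finite T2" using n1 finite_subset by blast+
    have G1: "T1 \<union> Z1 \<in> F"
    proof (rule in_F[OF mx])
      show "t \<le> k" using kt3 by simp
      show "t_cover n t F T1" using TTp[OF T12(1)] by blast
      show "T1 \<subseteq> T1 \<union> Z1" by blast
      show "T1 \<union> Z1 \<subseteq> {1..n}" using n1 Z1 unfolding Z_def by blast
      have "T1 \<inter> Z1 = {}" using Z1 unfolding Z_def by blast
      then show "card (T1 \<union> Z1) = k" using card_Un_disjoint[OF fT(1) Z1(3)] c1 Z1 kt3 by simp
    qed
    have G2: "T2 \<union> Z2 \<in> F"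
    proof (rule in_F[OF mx])
      show "t \<le> k" using kt3 by simp
      show "t_cover n t F T2" using TTp[OF T12(2)] by blast
      show "T2 \<subseteq> T2 \<union> Z2" by blast
      show "T2 \<union> Z2 \<subseteq> {1..n}" using n1 Z2 unfolding Z_def by blast
      have "T2 \<inter> Z2 = {}" using Z2 unfolding Z_def by blast
      then show "card (T2 \<union> Z2) = k" using card_Un_disjoint[OF fT(2) Z2(3)] c1 Z2 kt3 by simp
    qed
    have "t_intersecting t F" using mx unfolding maximal_t_intersecting_def by blast
    then have "t \<le> card ((T1 \<union> Z1) \<inter> (T2 \<union> Z2))" using G1 G2 unfolding t_intersecting_def by blast
    moreover have "(T1 \<union> Z1) \<inter> (T2 \<union> Z2) = T1 \<inter> T2" using Z1 Z2 unfolding Z_def by blast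
    ultimately show ?thesis by simp
  qed
  have C: "card TT < bnd t m \<or> (\<exists>r0\<in>R. TT = {S. S \<subseteq> U0 \<union> R \<and> card S = t+2 \<and> t+1 \<le> card (S \<inter> insert r0 U0)})"
    by (rule core[OF fU U0p(2) t1 fR cR m3 dj TTa TI])
  then show ?thesis
  proof
    assume "card TT < bnd t m"
    then show ?thesis unfolding TT_def bnd_def m_def by blast
  next
    assume "\<exists>r0\<in>R. TT = {S. S \<subseteq> U0 \<union> R \<and> card S = t+2 \<and> t+1 \<le> card (S \<inter> insert r0 U0)}"
    then obtain r0 where r0: "r0 \<in> R" "TT = {S. S \<subseteq> U0 \<union> R \<and> card S = t+2 \<and> t+1 \<le> card (S \<inter> insert r0 U0)}" by blast
    have "U0 \<union> R \<in> ksubsets n (k+2)"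
    proof -
      have "card (U0 \<union> R) = card U0 + card R" using card_Un_disjoint[OF fU fR dj] .
      then have "card (U0 \<union> R) = k + 2" using U0p(2) cR kt3 unfolding m_def by simp
      moreover have "U0 \<union> R \<subseteq> {1..n}" using U0n F0p unfolding R_def by blast
      ultimately show ?thesis unfolding ksubsets_def by blast
    qed
    moreover have "insert r0 U0 \<subseteq> U0 \<union> R" using r0 by blast
    moreover have "card (insert r0 U0) = t + 2" proof - have "r0 \<notin> U0" using r0 dj by blast then show ?thesis using fU U0p(2) by simp qed
    ultimately show ?thesis using r0(2) unfolding TT_def by blast
  qed
qed

end
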